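(* Let $q$ be a prime power, $e\ge 2$, $a\in\mathbb{F}_{q^e}^*$, and $\ell=q^{e-1}+\cdots+q+1$. Let $r$ and $s$ be positive integers with $r\equiv s\pmod{\ell}$. Suppose that $x^s(x^{q-1}+a)$ does not permute $\mathbb{F}_{q^e}$. If $\sum_{A\in S_{N,s}}\binom{N}{A}a^{N-A}\neq 0$ for some $N\in\{1,\dots,q^e-2\}$ with $q-1\mid N$, then $x^r(x^{q-1}+a)$ does not permute $\mathbb{F}_{q^e}$.
   Context: For a positive integer $t$ and an integer $N\ge 1$, $S_{N,t}=\{A\in\mathbb{Z}: A=\frac{j(q^e-1)-tN}{q-1}\text{ for some } j\in\mathbb{Z},\ 0\le A\le N\}$. Binomial coefficients are interpreted in $\mathbb{F}_{q^e}$. *)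

theory Defs
  imports "HOL-Number_Theory.Number_Theory"
begin

definition S_set :: "nat \<Rightarrow> nat \<Rightarrow> nat \<Rightarrow> nat \<Rightarrow> nat set" where
  "S_set q e N t = {A. A \<le> N \<and>
     (\<exists>j::int. int A * (int q - 1) = j * (int q ^ e - 1) - int t * int N)}"

end

theory Submission
  imports Defs "HOL-Computational_Algebra.Polynomial"
begin

lemma char_card: "of_nat (card (UNIV::'f::{field,finite} set)) = (0::'f)"
proof -
  have "(\<Sum>x\<in>UNIV. x) = (\<Sum>x\<in>UNIV. x + (1::'f))"
    by (rule sum.reindex_bij_witness[of _ "\<lambda>x. x + 1" "\<lambda>x. x - 1"]) auto
  also have "\<dots> = (\<Sum>x\<in>UNIV. x) + of_nat (card (UNIV::'f set))"
    by (simp add: sum.distrib)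
  finally show ?thesis by simp
qed

lemma fermat_ff:
  fixes x :: "'f::{field,finite}"
  assumes "x \<noteq> 0"
  shows "x ^ (card (UNIV::'f set) - 1) = 1"
proof -
  let ?G = "UNIV - {0::'f}"
  have "(\<Prod>y\<in>?G. y) = (\<Prod>y\<in>?G. x * y)"
    by (rule prod.reindex_bij_witness[of _ "\<lambda>y. x * y" "\<lambda>y. y / x"]) (use assms in auto)
  also have "\<dots> = x ^ card ?G * (\<Prod>y\<in>?G. y)"
    by (simp add: prod.distrib)
  finally have "x ^ card ?G = 1"
    by (metis (no_types, lifting) DiffD2 finite mult_cancel_right2 prod_zero_iff singletonI)
  moreover have "card ?G = card (UNIV::'f set) - 1" by (simp add: card_Diff_subset)
  ultimately show ?thesis by simp
qed

lemma exists_nonroot: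
  fixes m :: nat
  assumes "0 < m" "m < card (UNIV::'f::{field,finite} set) - 1"
  shows "\<exists>c::'f. c \<noteq> 0 \<and> c ^ m \<noteq> 1"
proof (rule ccontr)
  assume "\<not> ?thesis"
  hence H: "\<And>c::'f. c \<noteq> 0 \<Longrightarrow> c ^ m = 1" by blast
  let ?p = "monom (1::'f) m + [:-1:]"
  have deg: "degree ?p = m" using assms(1) by (simp add: degree_add_eq_left degree_monom_eq)
  hence nz: "?p \<noteq> 0" using assms(1) by auto
  have "UNIV - {0::'f} \<subseteq> {x. poly ?p x = 0}" using H by (auto simp: poly_monom)
  hence "card (UNIV - {0::'f}) \<le> card {x. poly ?p x = 0}"
    by (intro card_mono) (auto intro: poly_roots_finite nz)
  also have "\<dots> \<le> m" using card_poly_roots_bound[OF nz] deg by simp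
  finally show False using assms(2) by (simp add: card_Diff_subset)
qed

lemma power_sum_ff:
  fixes m :: nat
  assumes "0 < m"
  shows "(\<Sum>x\<in>(UNIV::'f::{field,finite} set). x ^ m) =
     (if (card (UNIV::'f set) - 1) dvd m then -1 else 0)"
proof -
  let ?Q = "card (UNIV::'f set)"
  have Q2: "?Q \<ge> 2"
  proof -
    have "{0::'f, 1} \<subseteq> UNIV" by simp
    hence "card {0::'f,1} \<le> ?Q" by (intro card_mono) auto
    thus ?thesis by simp
  qed
  have red: "x ^ m = x ^ (m mod (?Q - 1))" if "x \<noteq> 0" for x :: 'f
  proof -
    have "x ^ m = x ^ ((?Q - 1) * (m div (?Q - 1)) + m mod (?Q - 1))" by simp
    also have "\<dots> = x ^ (m mod (?Q - 1))"
      by (simp only: power_add power_mult fermat_ff[OF that]) simp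
    finally show ?thesis .
  qed
  show ?thesis
  proof (cases "(?Q - 1) dvd m")
    case True
    have "(\<Sum>x\<in>(UNIV::'f set). x ^ m) = (\<Sum>x\<in>(UNIV::'f set). if x = 0 then 0 else 1)"
      by (rule sum.cong) (use assms True red in auto)
    also have "\<dots> = of_nat (card (UNIV - {0::'f}))"
      by (simp add: sum.If_cases Diff_eq[symmetric] Compl_eq_Diff_UNIV)
    also have "\<dots> = of_nat ?Q - 1"
      using Q2 by (simp add: card_Diff_subset of_nat_diff)
    also have "\<dots> = -1" by (simp add: char_card)
    finally show ?thesis using True by simp
  next
    case False
    define m' where "m' = m mod (?Q - 1)"
    have m'pos: "0 < m'" using False m'_def by (simp add: mod_eq_0_iff_dvd[symmetric] gr0I)
    have m'lt: "m' < ?Q - 1" using Q2 m'_def by simp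
    obtain c :: 'f where c: "c \<noteq> 0" "c ^ m' \<noteq> 1" using exists_nonroot[OF m'pos m'lt] by blast
    have eq: "(\<Sum>x\<in>(UNIV::'f set). x ^ m) = (\<Sum>x\<in>(UNIV::'f set). x ^ m')"
    proof (rule sum.cong[OF refl])
      fix x :: 'f
      show "x ^ m = x ^ m'"
      proof (cases "x = 0")
        case True thus ?thesis using assms m'pos by (simp add: zero_power)
      qed (use red m'_def in auto)
    qed
    have "(\<Sum>x\<in>(UNIV::'f set). x ^ m') = (\<Sum>x\<in>(UNIV::'f set). (c * x) ^ m')"
      by (rule sum.reindex_bij_witness[of _ "\<lambda>y. c * y" "\<lambda>y. y / c"]) (use c in auto)
    also have "\<dots> = c ^ m' * (\<Sum>x\<in>(UNIV::'f set). x ^ m')"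
      by (simp add: power_mult_distrib sum_distrib_left)
    finally have "(1 - c ^ m') * (\<Sum>x\<in>(UNIV::'f set). x ^ m') = 0" by (simp add: algebra_simps)
    hence "(\<Sum>x\<in>(UNIV::'f set). x ^ m') = 0" using c by simp
    thus ?thesis using eq False by simp
  qed
qed


lemma geom_nat:
  fixes q e :: nat
  assumes "q \<ge> 1"
  shows "(q - 1) * (\<Sum>i<e. q ^ i) = q ^ e - 1"
proof -
  have "int ((q - 1) * (\<Sum>i<e. q ^ i)) = (int q - 1) * (\<Sum>i<e. int q ^ i)"
    using assms by (simp add: of_nat_diff)
  also have "\<dots> = int q ^ e - 1" by (simp add: power_diff_1_eq)
  also have "\<dots> = int (q ^ e - 1)" using assms by (simp add: of_nat_diff)
  finally have "int ((q - 1) * (\<Sum>i<e. q ^ i)) = int (q ^ e - 1)" .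
  thus ?thesis by (simp only: of_nat_eq_iff)
qed

theorem lemma2p3:
  fixes a :: "'f::{field,finite}"
    and q e r s :: nat
  assumes q_pp: "\<exists>p k. prime p \<and> k \<ge> 1 \<and> q = p ^ k"
    and e_ge: "e \<ge> 2"
    and card_F: "card (UNIV :: 'f set) = q ^ e"
    and a_nz: "a \<noteq> 0"
    and r_pos: "r > 0" and s_pos: "s > 0"
    and rs_cong: "[r = s] (mod (\<Sum>i<e. q ^ i))"
    and s_not_perm: "\<not> bij (\<lambda>x::'f. x ^ s * (x ^ (q - 1) + a))"
    and N_ex: "\<exists>N\<in>{1..q ^ e - 2}. (q - 1) dvd N \<and>
                 (\<Sum>A\<in>S_set q e N s. of_nat (N choose A) * a ^ (N - A)) \<noteq> (0::'f)"
  shows "\<not> bij (\<lambda>x::'f. x ^ r * (x ^ (q - 1) + a))"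
proof
  assume bijr: "bij (\<lambda>x::'f. x ^ r * (x ^ (q - 1) + a))"
  define Q where "Q = q ^ e"
  define l where "l = (\<Sum>i<e. q ^ i)"
  obtain p k where pk: "prime p" "k \<ge> 1" "q = p ^ k" using q_pp by blast
  have "0 < q" using pk by (simp add: prime_gt_0_nat)
  hence q1: "q \<ge> 1" by simp
  have Ql: "(q - 1) * l = Q - 1" unfolding l_def Q_def using geom_nat[OF q1] .
  have cardQ: "card (UNIV::'f set) = Q" using card_F Q_def by simp
  obtain N where N: "N \<in> {1..q ^ e - 2}" "(q - 1) dvd N"
    and Nsum: "(\<Sum>A\<in>S_set q e N s. of_nat (N choose A) * a ^ (N - A)) \<noteq> (0::'f)"
    using N_ex by blast
  obtain M where M: "N = (q - 1) * M" using N(2) by blast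
  have N1: "N \<ge> 1" and NQ: "N \<le> Q - 2" using N(1) Q_def by auto
  have rsmod: "r mod l = s mod l" using rs_cong unfolding l_def cong_def .
  have red: "x ^ ((q - 1) * t) = x ^ ((q - 1) * (t mod l))" if "x \<noteq> 0" for x :: 'f and t
  proof -
    have "(q - 1) * t = (q - 1) * (l * (t div l) + t mod l)" by simp
    also have "\<dots> = ((q - 1) * l) * (t div l) + (q - 1) * (t mod l)"
      by (simp only: distrib_left mult.assoc)
    also have "\<dots> = (Q - 1) * (t div l) + (q - 1) * (t mod l)" by (simp only: Ql)
    finally have eq: "(q - 1) * t = (Q - 1) * (t div l) + (q - 1) * (t mod l)" .
    have "x ^ ((q - 1) * t) = x ^ ((Q - 1) * (t div l) + (q - 1) * (t mod l))"
      by (simp only: eq)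
    also have "\<dots> = (x ^ (Q - 1)) ^ (t div l) * x ^ ((q - 1) * (t mod l))"
      by (simp only: power_add power_mult)
    finally have "x ^ ((q - 1) * t) = (x ^ (Q - 1)) ^ (t div l) * x ^ ((q - 1) * (t mod l))" .
    also have "x ^ (Q - 1) = 1" using fermat_ff[OF that] cardQ by simp
    finally show ?thesis by simp
  qed
  have pw: "(x ^ r * (x ^ (q - 1) + a)) ^ N = (x ^ s * (x ^ (q - 1) + a)) ^ N" for x :: 'f
  proof (cases "x = 0")
    case True thus ?thesis using r_pos s_pos N1 by (simp add: zero_power)
  next
    case False
    have "(x ^ r) ^ N = (x ^ ((q - 1) * r)) ^ M" by (simp add: M power_mult[symmetric] mult_ac)
    also have "\<dots> = (x ^ ((q - 1) * s)) ^ M" using red[OF False, of r] red[OF False, of s] rsmod by simp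
    also have "\<dots> = (x ^ s) ^ N" by (simp add: M power_mult[symmetric] mult_ac)
    finally show ?thesis by (simp add: power_mult_distrib)
  qed
  have "(\<Sum>x\<in>(UNIV::'f set). (x ^ r * (x ^ (q - 1) + a)) ^ N) = (\<Sum>y\<in>(UNIV::'f set). y ^ N)"
    by (rule sum.reindex_bij_betw[of "\<lambda>x. x ^ r * (x ^ (q - 1) + a)" UNIV UNIV "\<lambda>y. y ^ N"]) (use bijr in simp)
  also have "\<dots> = 0"
  proof -
    have "\<not> (Q - 1) dvd N" using N1 NQ by (auto dest: dvd_imp_le)
    thus ?thesis using power_sum_ff[of N, where 'f='f] N1 cardQ by simp
  qed
  finally have zero: "(\<Sum>x\<in>(UNIV::'f set). (x ^ s * (x ^ (q - 1) + a)) ^ N) = 0"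
    using pw by simp
  define T where "T = {A. A \<le> N \<and> (Q - 1) dvd (s * N + (q - 1) * A)}"
  have TS: "T = S_set q e N s"
  proof -
    have "(Q - 1) dvd (s * N + (q - 1) * A) \<longleftrightarrow>
        (\<exists>j::int. int A * (int q - 1) = j * (int q ^ e - 1) - int s * int N)" for A
    proof -
      have e1: "int q - 1 = int (q - 1)" using q1 by simp
      have e2: "int q ^ e - 1 = int (Q - 1)" using q1 Q_def by (simp add: of_nat_diff)
      have "(Q - 1) dvd (s * N + (q - 1) * A) \<longleftrightarrow> int (Q - 1) dvd int (s * N + (q - 1) * A)"
        by (simp only: int_dvd_int_iff)
      also have "\<dots> \<longleftrightarrow> (\<exists>j::int. int (s * N + (q - 1) * A) = int (Q - 1) * j)"
        by (simp add: dvd_def)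
      also have "\<dots> \<longleftrightarrow> (\<exists>j::int. int A * (int q - 1) = j * (int q ^ e - 1) - int s * int N)"
      proof (unfold e1 e2, intro ex_cong1)
        fix j :: int
        have h1: "int (s * N + (q - 1) * A) = int s * int N + int A * int (q - 1)" by simp
        have h2: "int (Q - 1) * j = j * int (Q - 1)" by (rule mult.commute)
        show "(int (s * N + (q - 1) * A) = int (Q - 1) * j) =
          (int A * int (q - 1) = j * int (Q - 1) - int s * int N)"
          unfolding h1 h2 by linarith
      qed
      finally show ?thesis .
    qed
    thus ?thesis unfolding T_def S_set_def by blast
  qed
  have "(\<Sum>x\<in>(UNIV::'f set). (x ^ s * (x ^ (q - 1) + a)) ^ N)
      = (\<Sum>x\<in>(UNIV::'f set). \<Sum>A\<le>N. of_nat (N choose A) * a ^ (N - A) * x ^ (s * N + (q - 1) * A))"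
  proof (rule sum.cong[OF refl])
    fix x :: 'f
    have "(x ^ s * (x ^ (q - 1) + a)) ^ N = x ^ (s * N) * (x ^ (q - 1) + a) ^ N"
      by (simp add: power_mult_distrib power_mult)
    also have "\<dots> = x ^ (s * N) * (\<Sum>A\<le>N. of_nat (N choose A) * (x ^ (q - 1)) ^ A * a ^ (N - A))"
      by (simp add: binomial_ring)
    also have "\<dots> = (\<Sum>A\<le>N. of_nat (N choose A) * a ^ (N - A) * x ^ (s * N + (q - 1) * A))"
      by (simp add: sum_distrib_left power_add power_mult[symmetric] mult_ac)
    finally show "(x ^ s * (x ^ (q - 1) + a)) ^ N = \<dots>" .
  qed
  also have "\<dots> = (\<Sum>A\<le>N. of_nat (N choose A) * a ^ (N - A) * (\<Sum>x\<in>(UNIV::'f set). x ^ (s * N + (q - 1) * A)))"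
    by (subst sum.swap) (simp add: sum_distrib_left)
  also have "\<dots> = (\<Sum>A\<le>N. if (Q - 1) dvd (s * N + (q - 1) * A) then - (of_nat (N choose A) * a ^ (N - A)) else 0)"
  proof (rule sum.cong[OF refl])
    fix A
    have "s * N + (q - 1) * A > 0" using s_pos N1 by simp
    from power_sum_ff[OF this, where 'f='f] cardQ
    show "of_nat (N choose A) * a ^ (N - A) * (\<Sum>x\<in>(UNIV::'f set). x ^ (s * N + (q - 1) * A)) =
      (if (Q - 1) dvd (s * N + (q - 1) * A) then - (of_nat (N choose A) * a ^ (N - A)) else 0)"
      by simp
  qed
  also have "\<dots> = - (\<Sum>A\<in>T. of_nat (N choose A) * a ^ (N - A))"
    unfolding T_def by (simp add: sum.If_cases sum_negf Int_def atMost_def conj_commute)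
  finally have "(\<Sum>A\<in>T. of_nat (N choose A) * a ^ (N - A)) = (0::'f)" using zero by simp
  thus False using Nsum TS by simp
qed

end
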